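(* Let $\mathbb{F}\in\{\mathbb{R},\mathbb{C}\}$, let $\boldsymbol A\in\mathbb{F}^{m\times n}$ with $m<n$, and let $k\in\{1,\dots,n\}$ be an integer. Suppose there exist a map $\Delta:\mathbb{R}^m\to\mathbb{F}^n$ and a constant $c_0>0$ such that \[ \mathrm{dist}(\Delta(|\boldsymbol A\boldsymbol x|),\boldsymbol x)\le c_0\,\sigma_k(\boldsymbol x)_2\qquad\text{for all }\boldsymbol x\in\mathbb{F}^n . \] Then $m\ge c\,n$ for a constant $c>0$ depending only on $c_0$.
   Context: $|\boldsymbol u|$ is the entrywise modulus. $\mathrm{dist}(\boldsymbol x,\boldsymbol y)=\min_{c\in\mathbb F,|c|=1}\|\boldsymbol x-c\boldsymbol y\|_2$. $\Sigma_k=\{\boldsymbol z\in\mathbb F^n:\|\boldsymbol z\|_0\le k\}$, $\sigma_k(\boldsymbol x)_2=\min_{\boldsymbol z\in\Sigma_k}\mathrm{dist}(\boldsymbol x,\boldsymbol z)$. *)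

theory Defs
  imports Complex_Main
begin

text \<open>Vectors in F^n are represented as functions nat => F vanishing at indices >= n
  (F = real or complex, both instances of real_normed_field).
  An m x n matrix is a function nat => nat => F, only entries i<m, j<n matter.\<close>

definition fvec :: "nat \<Rightarrow> (nat \<Rightarrow> 'a::zero) set" where
  "fvec n = {x. \<forall>i\<ge>n. x i = 0}"

definition matvec :: "(nat \<Rightarrow> nat \<Rightarrow> 'a::comm_ring) \<Rightarrow> nat \<Rightarrow> nat \<Rightarrow> (nat \<Rightarrow> 'a) \<Rightarrow> nat \<Rightarrow> 'a" where
  "matvec A m n x = (\<lambda>i. if i < m then (\<Sum>j<n. A i j * x j) else 0)"

definition entry_abs :: "(nat \<Rightarrow> 'a::real_normed_vector) \<Rightarrow> nat \<Rightarrow> real" where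
  "entry_abs u = (\<lambda>i. norm (u i))"

definition norm2 :: "nat \<Rightarrow> (nat \<Rightarrow> 'a::real_normed_vector) \<Rightarrow> real" where
  "norm2 n x = sqrt (\<Sum>i<n. (norm (x i))\<^sup>2)"

definition pdist :: "nat \<Rightarrow> (nat \<Rightarrow> 'a::real_normed_field) \<Rightarrow> (nat \<Rightarrow> 'a) \<Rightarrow> real" where
  "pdist n x y = Inf {norm2 n (\<lambda>i. x i - c * y i) | c. norm c = 1}"

definition sparse_set :: "nat \<Rightarrow> nat \<Rightarrow> (nat \<Rightarrow> 'a::zero) set" where
  "sparse_set n k = {z \<in> fvec n. card {i. i < n \<and> z i \<noteq> 0} \<le> k}"

definition sigma_k :: "nat \<Rightarrow> nat \<Rightarrow> (nat \<Rightarrow> 'a::real_normed_field) \<Rightarrow> real" where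
  "sigma_k n k x = Inf (pdist n x ` sparse_set n k)"

end

theory Submission
  imports Defs "HOL-Analysis.L2_Norm"
begin


definition Inv :: "nat \<Rightarrow> nat \<Rightarrow> (nat \<Rightarrow> nat \<Rightarrow> complex) \<Rightarrow> (nat \<Rightarrow> nat \<Rightarrow> complex) \<Rightarrow> bool" where
  "Inv n m A P \<longleftrightarrow>
     (\<forall>i j. (n \<le> i \<or> n \<le> j) \<longrightarrow> P i j = 0) \<and>
     (\<forall>i j. P j i = cnj (P i j)) \<and>
     (\<forall>i j. (\<Sum>k<n. P i k * P k j) = P i j) \<and>
     (\<forall>r<m. \<forall>l. (\<Sum>j<n. A r j * P j l) = 0) \<and>
     (\<Sum>i<n. Re (P i i)) \<ge> real n - real m"

lemma cnj_mult_self: "cnj z * z = complex_of_real ((cmod z)\<^sup>2)"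
  by (simp add: complex_mult_cnj cmod_power2 mult.commute)

lemma Inv_base: "Inv n 0 A (\<lambda>i j. if i = j \<and> i < n then 1 else 0)"
proof -
  have "(\<Sum>k<n. (if i = k \<and> i < n then 1 else 0) * (if k = j \<and> k < n then 1 else 0))
      = (if i = j \<and> i < n then 1 else (0::complex))" for i j
  proof -
    have "(\<Sum>k<n. (if i = k \<and> i < n then 1 else 0) * (if k = j \<and> k < n then 1 else 0))
       = (\<Sum>k<n. if k = i then (if i = j \<and> i < n then 1 else (0::complex)) else 0)"
      by (rule sum.cong) auto
    then show ?thesis by simp
  qed
  then show ?thesis unfolding Inv_def by auto
qed

lemma Inv_step:
  assumes I: "Inv n m A P"
  shows "\<exists>P'. Inv n (Suc m) A P'"
proof -
  have P0: "\<And>i j. n \<le> i \<Longrightarrow> P i j = 0" "\<And>i j. n \<le> j \<Longrightarrow> P i j = 0"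
    and Ph: "\<And>i j. P j i = cnj (P i j)"
    and Pid: "\<And>i j. (\<Sum>k<n. P i k * P k j) = P i j"
    and PA: "\<And>r l. r < m \<Longrightarrow> (\<Sum>j<n. A r j * P j l) = 0"
    and Ptr: "(\<Sum>i<n. Re (P i i)) \<ge> real n - real m"
  proof -
    note C = I[unfolded Inv_def]
    note C1 = C[THEN conjunct1] and C2 = C[THEN conjunct2, THEN conjunct1]
      and C3 = C[THEN conjunct2, THEN conjunct2, THEN conjunct1]
      and C4 = C[THEN conjunct2, THEN conjunct2, THEN conjunct2, THEN conjunct1]
      and C5 = C[THEN conjunct2, THEN conjunct2, THEN conjunct2, THEN conjunct2]
    show "\<And>i j. n \<le> i \<Longrightarrow> P i j = 0" "\<And>i j. n \<le> j \<Longrightarrow> P i j = 0"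
      using C1 by auto
    show "\<And>i j. P j i = cnj (P i j)" by (rule C2[rule_format])
    show "\<And>i j. (\<Sum>k<n. P i k * P k j) = P i j" by (rule C3[rule_format])
    show "\<And>r l. r < m \<Longrightarrow> (\<Sum>j<n. A r j * P j l) = 0" using C4 by blast
    show "(\<Sum>i<n. Re (P i i)) \<ge> real n - real m" by (rule C5)
  qed
  define b where "b j = cnj (A m j)" for j
  define u where "u j = (\<Sum>l<n. P j l * b l)" for j
  define s where "s = (\<Sum>j<n. (cmod (u j))\<^sup>2)"
  have u0: "u j = 0" if "n \<le> j" for j using P0(1)[OF that] by (simp add: u_def)
  have Pu: "(\<Sum>k<n. P i k * u k) = u i" for i
  proof -
    have "(\<Sum>k<n. P i k * u k) = (\<Sum>k<n. \<Sum>l<n. P i k * P k l * b l)"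
      by (simp add: u_def sum_distrib_left mult.assoc)
    also have "\<dots> = (\<Sum>l<n. \<Sum>k<n. P i k * P k l * b l)" by (rule sum.swap)
    also have "\<dots> = (\<Sum>l<n. (\<Sum>k<n. P i k * P k l) * b l)" by (simp add: sum_distrib_right)
    also have "\<dots> = u i" by (simp add: Pid u_def)
    finally show ?thesis .
  qed
  have uP: "(\<Sum>k<n. cnj (u k) * P k j) = cnj (u j)" for j
  proof -
    have "(\<Sum>k<n. cnj (u k) * P k j) = cnj (\<Sum>k<n. P j k * u k)"
      by (simp add: Ph[of _ j] mult.commute)
    then show ?thesis by (simp add: Pu)
  qed
  have aP: "(\<Sum>j<n. A m j * P j l) = cnj (u l)" for l
  proof -
    have "(\<Sum>j<n. A m j * P j l) = (\<Sum>j<n. cnj (b j) * cnj (P l j))"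
      by (simp add: b_def Ph[of _ l])
    also have "\<dots> = cnj (u l)" by (simp add: u_def mult.commute)
    finally show ?thesis .
  qed
  have s_eq: "(\<Sum>k<n. cnj (u k) * u k) = complex_of_real s"
    by (simp add: s_def cnj_mult_self)
  have au: "(\<Sum>j<n. A m j * u j) = complex_of_real s"
  proof -
    have "(\<Sum>j<n. A m j * u j) = (\<Sum>j<n. \<Sum>l<n. A m j * P j l * b l)"
      by (simp add: u_def sum_distrib_left mult.assoc)
    also have "\<dots> = (\<Sum>l<n. \<Sum>j<n. A m j * P j l * b l)" by (rule sum.swap)
    also have "\<dots> = (\<Sum>l<n. cnj (u l) * b l)" by (simp add: sum_distrib_right[symmetric] aP)
    also have "\<dots> = (\<Sum>l<n. cnj (u l) * u l)"
    proof -
      have "(\<Sum>l<n. cnj (u l) * u l) = (\<Sum>l<n. cnj (u l) * (\<Sum>k<n. P l k * b k))" by (simp add: u_def)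
      also have "\<dots> = (\<Sum>l<n. \<Sum>k<n. cnj (u l) * P l k * b k)" by (simp add: sum_distrib_left mult.assoc)
      also have "\<dots> = (\<Sum>k<n. \<Sum>l<n. cnj (u l) * P l k * b k)" by (rule sum.swap)
      also have "\<dots> = (\<Sum>k<n. cnj (u k) * b k)" by (simp add: sum_distrib_right[symmetric] uP)
      finally show ?thesis by simp
    qed
    finally show ?thesis using s_eq by simp
  qed
  have Au: "(\<Sum>j<n. A r j * u j) = 0" if "r < m" for r
  proof -
    have "(\<Sum>j<n. A r j * u j) = (\<Sum>j<n. \<Sum>l<n. A r j * P j l * b l)"
      by (simp add: u_def sum_distrib_left mult.assoc)
    also have "\<dots> = (\<Sum>l<n. \<Sum>j<n. A r j * P j l * b l)" by (rule sum.swap)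
    also have "\<dots> = 0" by (simp add: sum_distrib_right[symmetric] PA[OF that])
    finally show ?thesis .
  qed
  show ?thesis
  proof (cases "s = 0")
    case True
    have "u j = 0" for j
    proof (cases "j < n")
      case True
      have "(cmod (u j))\<^sup>2 = 0"
        using \<open>s = 0\<close> unfolding s_def
        by (subst (asm) sum_nonneg_eq_0_iff) (use True in auto)
      then show ?thesis by simp
    qed (simp add: u0)
    then have "\<forall>r<Suc m. \<forall>l. (\<Sum>j<n. A r j * P j l) = 0"
      using PA aP by (auto simp: less_Suc_eq)
    then have "Inv n (Suc m) A P"
      unfolding Inv_def
    proof (intro conjI allI impI)
      fix i j show "P j i = cnj (P i j)" by (rule Ph)
    qed (use P0 Pid Ptr in auto)
    then show ?thesis by blast
  next
    case False
    define P' where "P' i j = P i j - u i * cnj (u j) / complex_of_real s" for i j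
    have AP': "A r j * P' j l = A r j * P j l - A r j * u j * cnj (u l) / s" for r j l
      unfolding P'_def by (simp add: right_diff_distrib)
    have "Inv n (Suc m) A P'"
      unfolding Inv_def
    proof (intro conjI allI impI)
      fix i j assume "n \<le> i \<or> n \<le> j"
      then show "P' i j = 0" by (auto simp: P'_def P0 u0)
    next
      fix i j show "P' j i = cnj (P' i j)" by (simp add: P'_def Ph[of j i] mult.commute)
    next
      fix i j
      have "(\<Sum>k<n. P' i k * P' k j) =
        (\<Sum>k<n. P i k * P k j) - u i / s * (\<Sum>k<n. cnj (u k) * P k j)
         - cnj (u j) / s * (\<Sum>k<n. P i k * u k) + u i * cnj (u j) / s / s * (\<Sum>k<n. cnj (u k) * u k)"
      proof -
        have e: "P' i k * P' k j = P i k * P k j - u i / s * (cnj (u k) * P k j)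
           - cnj (u j) / s * (P i k * u k) + u i * cnj (u j) / s / s * (cnj (u k) * u k)" for k
          unfolding P'_def by (simp add: algebra_simps diff_divide_distrib)
        show ?thesis unfolding e sum.distrib sum_subtractf sum_distrib_left[symmetric] by simp
      qed
      also have "\<dots> = P' i j"
      proof -
        have "complex_of_real s \<noteq> 0" using False by simp
        then have "u i * cnj (u j) / s / s * s = u i * cnj (u j) / s" by simp
        then show ?thesis by (simp add: Pid uP Pu s_eq P'_def)
      qed
      finally show "(\<Sum>k<n. P' i k * P' k j) = P' i j" .
    next
      fix r l assume "r < Suc m"
      show "(\<Sum>j<n. A r j * P' j l) = 0"
      proof (cases "r = m")
        case True
        have "(\<Sum>j<n. A r j * P' j l) = (\<Sum>j<n. A m j * P j l) - (\<Sum>j<n. A m j * u j) * cnj (u l) / s"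
          unfolding True AP' sum_subtractf sum_divide_distrib[symmetric] sum_distrib_right[symmetric] by simp
        also have "\<dots> = 0" using False by (simp add: aP au)
        finally show ?thesis .
      next
        case F: False
        then have "r < m" using \<open>r < Suc m\<close> by simp
        have "(\<Sum>j<n. A r j * P' j l) = (\<Sum>j<n. A r j * P j l) - (\<Sum>j<n. A r j * u j) * cnj (u l) / s"
          unfolding AP' sum_subtractf sum_divide_distrib[symmetric] sum_distrib_right[symmetric] by simp
        also have "\<dots> = 0" by (simp add: PA[OF \<open>r < m\<close>] Au[OF \<open>r < m\<close>])
        finally show ?thesis .
      qed
    next
      have "(\<Sum>i<n. Re (P' i i)) = (\<Sum>i<n. Re (P i i)) - (\<Sum>i<n. (cmod (u i))\<^sup>2) / s"
      proof -
        have "Re (P' i i) = Re (P i i) - (cmod (u i))\<^sup>2 / s" for i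
        proof -
          have "u i * cnj (u i) / complex_of_real s = complex_of_real ((cmod (u i))\<^sup>2 / s)"
            by (subst mult.commute) (simp only: cnj_mult_self of_real_divide)
          then show ?thesis by (simp only: P'_def minus_complex.sel Re_complex_of_real)
        qed
        then show ?thesis by (simp add: sum_subtractf sum_divide_distrib)
      qed
      also have "\<dots> = (\<Sum>i<n. Re (P i i)) - 1" using False by (simp add: s_def)
      finally show "real n - real (Suc m) \<le> (\<Sum>i<n. Re (P' i i))" using Ptr by simp
    qed
    then show ?thesis by blast
  qed
qed

lemma Inv_exists: "\<exists>P. Inv n m A P"
proof (induction m)
  case 0 show ?case using Inv_base by blast
next
  case (Suc m) then show ?case using Inv_step by blast
qed



lemma norm2_nonneg: "0 \<le> norm2 n x"
  unfolding norm2_def by (simp add: sum_nonneg)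

lemma pdist_ne: "{norm2 n (\<lambda>i. x i - c * y i) |c. norm (c::'a::real_normed_field) = 1} \<noteq> {}"
proof -
  have "norm2 n (\<lambda>i. x i - 1 * y i) \<in> {norm2 n (\<lambda>i. x i - c * y i) |c. norm (c::'a) = 1}"
    by (intro CollectI exI[of _ 1]) simp
  then show ?thesis by blast
qed

lemma pdist_nonneg: "0 \<le> pdist n (x :: nat \<Rightarrow> 'a::real_normed_field) y"
  unfolding pdist_def
proof (rule cInf_greatest)
  show "{norm2 n (\<lambda>i. x i - c * y i) |c. norm (c::'a) = 1} \<noteq> {}"
    by (rule pdist_ne)
qed (auto simp: norm2_nonneg)

lemma pdist_le: "norm (c::'a::real_normed_field) = 1 \<Longrightarrow> pdist n x y \<le> norm2 n (\<lambda>i. x i - c * y i)"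
  unfolding pdist_def
  by (rule cInf_lower) (auto intro!: bdd_belowI[where m=0] simp: norm2_nonneg)

lemma sigma_le: "y \<in> sparse_set n k \<Longrightarrow> sigma_k n k (x :: nat \<Rightarrow> 'a::real_normed_field) \<le> pdist n x y"
  unfolding sigma_k_def
  by (rule cInf_lower) (auto intro!: bdd_belowI[where m=0] simp: pdist_nonneg)

lemma pdist_lessD:
  assumes "pdist n (x :: nat \<Rightarrow> 'a::real_normed_field) y < e"
  shows "\<exists>c. norm c = 1 \<and> norm2 n (\<lambda>i. x i - c * y i) < e"
proof -
  have ne: "{norm2 n (\<lambda>i. x i - c * y i) |c. norm (c::'a) = 1} \<noteq> {}"
    by (rule pdist_ne)
  from cInf_lessD[OF ne assms[unfolded pdist_def]] show ?thesis by auto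
qed

lemma norm2_L2: "norm2 n x = L2_set (\<lambda>i. norm (x i)) {..<n}"
  unfolding norm2_def L2_set_def by simp

lemma norm2_triangle:
  "norm2 n (\<lambda>i. (f :: nat \<Rightarrow> 'a::real_normed_vector) i - g i) \<le> norm2 n f + norm2 n g"
proof -
  have "norm2 n (\<lambda>i. f i - g i) \<le> L2_set (\<lambda>i. norm (f i) + norm (g i)) {..<n}"
    unfolding norm2_L2 by (rule L2_set_mono) (auto simp: norm_triangle_ineq4)
  also have "\<dots> \<le> norm2 n f + norm2 n g"
    unfolding norm2_L2 by (rule L2_set_triangle_ineq)
  finally show ?thesis .
qed

lemma G:
  fixes A :: "nat \<Rightarrow> nat \<Rightarrow> 'a::real_normed_field" and \<Delta> :: "(nat \<Rightarrow> real) \<Rightarrow> nat \<Rightarrow> 'a"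
  assumes k1: "1 \<le> k"
    and H: "\<forall>x\<in>fvec n. pdist n (\<Delta> (entry_abs (matvec A m n x))) x \<le> c0 * sigma_k n k x"
    and c0: "c0 > 0" and w: "w \<in> fvec n" and Aw: "\<And>r. r < m \<Longrightarrow> (\<Sum>j<n. A r j * w j) = 0"
    and i: "i < n"
  shows "sqrt (\<Sum>j<n. (norm (w j))\<^sup>2) \<le> c0 * sqrt ((\<Sum>j<n. (norm (w j))\<^sup>2) - (norm (w i))\<^sup>2)"
proof -
  define x1 where "x1 = (\<lambda>j. if j = i then w i else 0)"
  define x2 where "x2 = (\<lambda>j. if j = i then 0 else - w j)"
  have x1f: "x1 \<in> fvec n" using i by (auto simp: fvec_def x1_def)
  have x2f: "x2 \<in> fvec n" using w by (auto simp: fvec_def x2_def)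
  have d: "x1 j - x2 j = w j" for j by (simp add: x1_def x2_def)
  have mv: "matvec A m n x1 = matvec A m n x2"
  proof
    fix r
    show "matvec A m n x1 r = matvec A m n x2 r"
    proof (cases "r < m")
      case True
      have "(\<Sum>j<n. A r j * x1 j) - (\<Sum>j<n. A r j * x2 j) = (\<Sum>j<n. A r j * w j)"
        by (simp add: sum_subtractf[symmetric] right_diff_distrib[symmetric] d)
      then show ?thesis using Aw[OF True] True by (simp add: matvec_def)
    qed (simp add: matvec_def)
  qed
  define z where "z = \<Delta> (entry_abs (matvec A m n x1))"
  have sp1: "x1 \<in> sparse_set n k"
  proof -
    have "{j. j < n \<and> x1 j \<noteq> 0} \<subseteq> {i}" by (auto simp: x1_def)
    then have "card {j. j < n \<and> x1 j \<noteq> 0} \<le> card {i}" by (rule card_mono[rotated]) simp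
    then show ?thesis using x1f k1 by (simp add: sparse_set_def)
  qed
  have sp0: "(\<lambda>j. 0) \<in> sparse_set n k" by (simp add: sparse_set_def fvec_def)
  have s1: "sigma_k n k x1 \<le> 0"
  proof -
    have "sigma_k n k x1 \<le> pdist n x1 x1" by (rule sigma_le[OF sp1])
    also have "\<dots> \<le> norm2 n (\<lambda>j. x1 j - 1 * x1 j)" by (rule pdist_le) simp
    also have "\<dots> = 0" by (simp add: norm2_def)
    finally show ?thesis .
  qed
  have s2: "sigma_k n k x2 \<le> norm2 n x2"
  proof -
    have "sigma_k n k x2 \<le> pdist n x2 (\<lambda>j. 0)" by (rule sigma_le[OF sp0])
    also have "\<dots> \<le> norm2 n (\<lambda>j. x2 j - 1 * 0)" by (rule pdist_le) simp
    finally show ?thesis by simp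
  qed
  have p1: "pdist n z x1 \<le> 0"
    using H x1f s1 c0 unfolding z_def by (smt (verit) mult_nonneg_nonpos)
  have p2: "pdist n z x2 \<le> c0 * norm2 n x2"
    using H x2f s2 c0 mv unfolding z_def by (smt (verit) mult_left_mono)
  define S where "S = (\<Sum>j<n. (norm (w j))\<^sup>2)"
  have nx2: "norm2 n x2 = sqrt (S - (norm (w i))\<^sup>2)"
  proof -
    have "(\<Sum>j<n. (norm (x2 j))\<^sup>2) = (\<Sum>j<n. (norm (w j))\<^sup>2 - (if j = i then (norm (w i))\<^sup>2 else 0))"
      by (rule sum.cong) (auto simp: x2_def)
    also have "\<dots> = S - (norm (w i))\<^sup>2"
      using i by (simp add: sum_subtractf S_def)
    finally show ?thesis by (simp add: norm2_def)
  qed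
  have key: "sqrt S \<le> c0 * norm2 n x2 + e" if e: "e > 0" for e
  proof -
    obtain a where a: "norm a = 1" "norm2 n (\<lambda>j. z j - a * x1 j) < e / 2"
      using pdist_lessD[of n z x1 "e/2"] p1 e by auto
    obtain b where b: "norm b = 1" "norm2 n (\<lambda>j. z j - b * x2 j) < c0 * norm2 n x2 + e / 2"
      using pdist_lessD[of n z x2 "c0 * norm2 n x2 + e/2"] p2 e by auto
    have "norm2 n (\<lambda>j. a * x1 j - b * x2 j) = sqrt S"
    proof -
      have "norm (a * x1 j - b * x2 j) = norm (w j)" for j
        using a(1) b(1) by (auto simp: x1_def x2_def norm_mult)
      then show ?thesis by (simp add: norm2_def S_def)
    qed
    moreover have "norm2 n (\<lambda>j. a * x1 j - b * x2 j)
        \<le> norm2 n (\<lambda>j. z j - b * x2 j) + norm2 n (\<lambda>j. z j - a * x1 j)"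
      using norm2_triangle[of n "\<lambda>j. z j - b * x2 j" "\<lambda>j. z j - a * x1 j"] by simp
    ultimately show ?thesis using a(2) b(2) by simp
  qed
  have "sqrt S \<le> c0 * norm2 n x2"
    by (rule field_le_epsilon) (rule key)
  then show ?thesis using nx2 S_def by simp
qed


lemma Ar:
  fixes p S c0 n m :: real
  assumes p: "0 < p" and tS: "p\<^sup>2 \<le> S" and Sp: "S \<le> p"
    and q: "sqrt S \<le> c0 * sqrt (S - p\<^sup>2)" and c0: "c0 > 0"
    and pn: "p \<ge> (n - m) / n" and n: "n > 0"
  shows "n \<le> c0\<^sup>2 * m"
proof -
  have S0: "0 \<le> S" using tS zero_le_power2[of p] by linarith
  have "S = (sqrt S)\<^sup>2" using tS p by (smt (verit) real_sqrt_pow2 zero_le_power2)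
  also have "\<dots> \<le> (c0 * sqrt (S - p\<^sup>2))\<^sup>2"
    using q S0 by (intro power_mono) auto
  also have "\<dots> = c0\<^sup>2 * (S - p\<^sup>2)" using tS by (simp add: power_mult_distrib)
  finally have S1: "S \<le> c0\<^sup>2 * (S - p\<^sup>2)" .
  have h: "p\<^sup>2 \<le> (c0\<^sup>2 - 1) * (S - p\<^sup>2)" using S1 by (simp add: algebra_simps)
  have pp: "p\<^sup>2 > 0" using p by simp
  have c1: "c0\<^sup>2 - 1 > 0"
  proof (rule ccontr)
    assume "\<not> c0\<^sup>2 - 1 > 0"
    then have "(c0\<^sup>2 - 1) * (S - p\<^sup>2) \<le> 0" using tS by (intro mult_nonpos_nonneg) auto
    then show False using h pp by linarith
  qed
  have "(c0\<^sup>2 - 1) * (S - p\<^sup>2) \<le> (c0\<^sup>2 - 1) * (p - p\<^sup>2)"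
    using c1 Sp by (intro mult_left_mono) auto
  with h have "p\<^sup>2 \<le> (c0\<^sup>2 - 1) * (p - p\<^sup>2)" by linarith
  then have "p * p \<le> p * ((c0\<^sup>2 - 1) * (1 - p))" by (simp add: power2_eq_square algebra_simps)
  then have "p \<le> (c0\<^sup>2 - 1) * (1 - p)" using p by simp
  then have 1: "1 \<le> c0\<^sup>2 * (1 - p)" by (simp add: algebra_simps)
  have "1 - p \<le> m / n" using pn n by (simp add: diff_divide_distrib)
  then have "c0\<^sup>2 * (1 - p) \<le> c0\<^sup>2 * (m / n)" by (rule mult_left_mono) simp
  with 1 have "1 \<le> c0\<^sup>2 * m / n" by simp
  then show ?thesis using n by (simp add: field_simps)
qed

lemma Inv_D:
  assumes I: "Inv n m A P"
  shows "\<And>i j. n \<le> i \<Longrightarrow> P i j = 0" "\<And>i j. n \<le> j \<Longrightarrow> P i j = 0"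
    and "\<And>i j. P j i = cnj (P i j)"
    and "\<And>i j. (\<Sum>k<n. P i k * P k j) = P i j"
    and "\<And>r l. r < m \<Longrightarrow> (\<Sum>j<n. A r j * P j l) = 0"
    and "(\<Sum>i<n. Re (P i i)) \<ge> real n - real m"
proof -
  note C = I[unfolded Inv_def]
  note C1 = C[THEN conjunct1] and C2 = C[THEN conjunct2, THEN conjunct1]
    and C3 = C[THEN conjunct2, THEN conjunct2, THEN conjunct1]
    and C4 = C[THEN conjunct2, THEN conjunct2, THEN conjunct2, THEN conjunct1]
    and C5 = C[THEN conjunct2, THEN conjunct2, THEN conjunct2, THEN conjunct2]
  show "\<And>i j. n \<le> i \<Longrightarrow> P i j = 0" "\<And>i j. n \<le> j \<Longrightarrow> P i j = 0"
    using C1 by auto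
  show "\<And>i j. P j i = cnj (P i j)" by (rule C2[rule_format])
  show "\<And>i j. (\<Sum>k<n. P i k * P k j) = P i j" by (rule C3[rule_format])
  show "\<And>r l. r < m \<Longrightarrow> (\<Sum>j<n. A r j * P j l) = 0" using C4 by blast
  show "(\<Sum>i<n. Re (P i i)) \<ge> real n - real m" by (rule C5)
qed

lemma Inv_pick:
  assumes I: "Inv n m A P" and mn: "m < n"
  shows "\<exists>i<n. Re (P i i) \<ge> (real n - real m) / real n"
proof (rule ccontr)
  assume "\<not> ?thesis"
  then have lt: "\<And>i. i < n \<Longrightarrow> Re (P i i) < (real n - real m) / real n" by auto
  have "(\<Sum>i<n. Re (P i i)) < (\<Sum>i<n. (real n - real m) / real n)"
    using mn by (intro sum_strict_mono) (auto simp: lt)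
  also have "\<dots> = real n - real m" using mn by simp
  finally show False using Inv_D(6)[OF I] by linarith
qed

lemma Inv_diag:
  assumes I: "Inv n m A P"
  shows "P i i = complex_of_real (\<Sum>j<n. (cmod (P j i))\<^sup>2)"
proof -
  have Ph: "\<And>i j. P j i = cnj (P i j)" and Pid: "\<And>i j. (\<Sum>k<n. P i k * P k j) = P i j"
    by (rule Inv_D(3)[OF I], rule Inv_D(4)[OF I])
  have "complex_of_real (\<Sum>j<n. (cmod (P j i))\<^sup>2) = (\<Sum>j<n. cnj (P j i) * P j i)"
    by (simp add: cnj_mult_self)
  also have "\<dots> = (\<Sum>j<n. P i j * P j i)"
  proof (rule sum.cong[OF refl])
    fix j show "cnj (P j i) * P j i = P i j * P j i" using Ph[of i j] by simp
  qed
  also have "\<dots> = P i i" by (rule Pid)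
  finally show ?thesis by simp
qed

lemma CX:
  fixes A :: "nat \<Rightarrow> nat \<Rightarrow> complex" and \<Delta> :: "(nat \<Rightarrow> real) \<Rightarrow> nat \<Rightarrow> complex"
  assumes c0: "c0 > 0" and mn: "m < n" and k1: "1 \<le> k"
    and H: "\<forall>x\<in>fvec n. pdist n (\<Delta> (entry_abs (matvec A m n x))) x \<le> c0 * sigma_k n k x"
  shows "real n \<le> c0\<^sup>2 * real m"
proof -
  obtain P where I: "Inv n m A P" using Inv_exists by blast
  obtain i where i: "i < n" and pi: "Re (P i i) \<ge> (real n - real m) / real n"
    using Inv_pick[OF I mn] by blast
  define S where "S = (\<Sum>j<n. (cmod (P j i))\<^sup>2)"
  have PS: "P i i = complex_of_real S" using Inv_diag[OF I] S_def by simp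
  have S0: "S \<ge> 0" unfolding S_def by (simp add: sum_nonneg)
  have wf: "(\<lambda>j. P j i) \<in> fvec n" using Inv_D(1)[OF I] unfolding fvec_def by blast
  have Aw: "\<And>r. r < m \<Longrightarrow> (\<Sum>j<n. A r j * P j i) = 0" by (rule Inv_D(5)[OF I])
  have q: "sqrt S \<le> c0 * sqrt (S - S\<^sup>2)"
    using G[OF k1 H c0 wf Aw i] PS S0 by (simp add: S_def[symmetric])
  have t: "S\<^sup>2 \<le> S"
  proof -
    have "(cmod (P i i))\<^sup>2 \<le> S" unfolding S_def
      by (rule member_le_sum[where f="\<lambda>j. (cmod (P j i))\<^sup>2"]) (use i in auto)
    then show ?thesis using PS S0 by simp
  qed
  have pos: "(real n - real m) / real n > 0" using mn by simp
  have pS: "(real n - real m) / real n \<le> S" using pi PS by simp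
  have Spos: "0 < S" using pS pos by linarith
  have npos: "real n > 0" using mn by simp
  show ?thesis by (rule Ar[OF Spos t order_refl q c0 pS npos])
qed

lemma RX:
  fixes A :: "nat \<Rightarrow> nat \<Rightarrow> real" and \<Delta> :: "(nat \<Rightarrow> real) \<Rightarrow> nat \<Rightarrow> real"
  assumes c0: "c0 > 0" and mn: "m < n" and k1: "1 \<le> k"
    and H: "\<forall>x\<in>fvec n. pdist n (\<Delta> (entry_abs (matvec A m n x))) x \<le> c0 * sigma_k n k x"
  shows "real n \<le> c0\<^sup>2 * real m"
proof -
  define Ac where "Ac r j = complex_of_real (A r j)" for r j
  obtain P where I: "Inv n m Ac P" using Inv_exists by blast
  obtain i where i: "i < n" and pi: "Re (P i i) \<ge> (real n - real m) / real n"
    using Inv_pick[OF I mn] by blast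
  define p where "p = (\<Sum>j<n. (cmod (P j i))\<^sup>2)"
  define S where "S = (\<Sum>j<n. (Re (P j i))\<^sup>2)"
  have PS: "P i i = complex_of_real p" using Inv_diag[OF I] p_def by simp
  have wf: "(\<lambda>j. Re (P j i)) \<in> fvec n" using Inv_D(1)[OF I] unfolding fvec_def by simp
  have Aw: "(\<Sum>j<n. A r j * Re (P j i)) = 0" if r: "r < m" for r
  proof -
    have "(\<Sum>j<n. Ac r j * P j i) = 0" by (rule Inv_D(5)[OF I r])
    then have "Re (\<Sum>j<n. Ac r j * P j i) = 0" by simp
    then show ?thesis by (simp add: Re_sum Ac_def)
  qed
  have q0: "sqrt S \<le> c0 * sqrt (S - (Re (P i i))\<^sup>2)"
    using G[OF k1 H c0 wf Aw i] by (simp add: S_def[symmetric])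
  have q: "sqrt S \<le> c0 * sqrt (S - p\<^sup>2)" using q0 PS by simp
  have Sp: "S \<le> p" unfolding S_def p_def
    by (rule sum_mono) (simp add: cmod_power2)
  have t: "p\<^sup>2 \<le> S"
  proof -
    have "(Re (P i i))\<^sup>2 \<le> S" unfolding S_def
      by (rule member_le_sum[where f="\<lambda>j. (Re (P j i))\<^sup>2"]) (use i in auto)
    then show ?thesis using PS by simp
  qed
  have pos: "(real n - real m) / real n > 0" using mn by simp
  have pS: "(real n - real m) / real n \<le> p" using pi PS by simp
  have ppos: "0 < p" using pS pos by linarith
  have npos: "real n > 0" using mn by simp
  show ?thesis by (rule Ar[OF ppos t Sp q c0 pS npos])
qed

theorem proposition2p10:
  fixes c0 :: real
  assumes "c0 > 0"
  shows "\<exists>c>0.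
    (\<forall>(A :: nat \<Rightarrow> nat \<Rightarrow> real) m n k (\<Delta> :: (nat \<Rightarrow> real) \<Rightarrow> nat \<Rightarrow> real).
       m < n \<and> 1 \<le> k \<and> k \<le> n \<and>
       (\<forall>y \<in> fvec m. \<Delta> y \<in> fvec n) \<and>
       (\<forall>x \<in> fvec n. pdist n (\<Delta> (entry_abs (matvec A m n x))) x \<le> c0 * sigma_k n k x)
       \<longrightarrow> real m \<ge> c * real n) \<and>
    (\<forall>(A :: nat \<Rightarrow> nat \<Rightarrow> complex) m n k (\<Delta> :: (nat \<Rightarrow> real) \<Rightarrow> nat \<Rightarrow> complex).
       m < n \<and> 1 \<le> k \<and> k \<le> n \<and>
       (\<forall>y \<in> fvec m. \<Delta> y \<in> fvec n) \<and>
       (\<forall>x \<in> fvec n. pdist n (\<Delta> (entry_abs (matvec A m n x))) x \<le> c0 * sigma_k n k x)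
       \<longrightarrow> real m \<ge> c * real n)"
proof -
  have c0: "c0 > 0" by (rule assms)
  have conv: "1 / c0\<^sup>2 * real n \<le> real m" if "real n \<le> c0\<^sup>2 * real m" for n m :: nat
    using that c0 by (simp add: field_simps)
  show ?thesis
    by (rule exI[of _ "1 / c0\<^sup>2"]) (use c0 conv RX[OF c0] CX[OF c0] in auto)
qed

end
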